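(* Let $0<\nu<1$, let $\chi$ be a kernel with $M_\nu(\chi)<\infty$, and let $f\in\mathcal{C}(\mathbb{R}^+)$. Then for all sufficiently large $w>0$ and every $t\in\mathbb{R}^+$, $$|(S_w^\chi f)(t)-f(t)|\le \omega(f,w^{-\nu})\,[M_\nu(\chi)+2M_0(\chi)]+2^{\nu+1}\|f\|_\infty M_\nu(\chi)\,w^{-\nu}.$$
   Context: Let $\mathbb{R}^+=(0,\infty)$. For $\chi:\mathbb{R}^+\to\mathbb{R}$ and $\nu\ge 0$ set $M_\nu(\chi):=\sup_{u>0}\sum_{k\in\mathbb{Z}}|\chi(e^{-k}u)|\,|k-\log u|^\nu$ (with $|k-\log u|^0:=1$). A kernel is a function $\chi:\mathbb{R}^+\to\mathbb{R}$ such that (K1) $\sum_{k\in\mathbb{Z}}\chi(e^{-k}u)=1$ for every $u\in\mathbb{R}^+$, and (K2) $M_0(\chi)<\infty$ and $M_\nu(\chi)<\infty$ for some $\nu>0$. For a bounded $f:\mathbb{R}^+\to\mathbb{R}$, $w>0$ and $t\in\mathbb{R}^+$, the exponential sampling series is $(S_w^\chi f)(t)=\sum_{k\in\mathbb{Z}}\chi(e^{-k}t^w)\,f(e^{k/w})$. $\|f\|_\infty=\sup_{x>0}|f(x)|$. $\mathcal{C}(\mathbb{R}^+)$ is the space of bounded functions $f:\mathbb{R}^+\to\mathbb{R}$ that are log-uniformly continuous: for every $\epsilon>0$ there is $\delta>0$ with $|f(p)-f(q)|<\epsilon$ whenever $|\log p-\log q|<\delta$. The logarithmic modulus of continuity is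 $\omega(f,\delta):=\sup\{|f(p)-f(q)|: p,q\in\mathbb{R}^+,\ |\log p-\log q|\le\delta\}$ for $\delta>0$. *)

theory Defs
  imports "HOL-Analysis.Analysis"
begin

text \<open>|x|^nu with the convention |x|^0 := 1 (Isabelle's 0 powr 0 = 0).\<close>
definition abspow :: "real \<Rightarrow> real \<Rightarrow> real" where
  "abspow x nu = (if nu = 0 then 1 else \<bar>x\<bar> powr nu)"

text \<open>Absolute moment M_nu(chi), valued in [0,\<infinity>] so that divergence is recorded as \<infinity>.\<close>
definition M_moment :: "real \<Rightarrow> (real \<Rightarrow> real) \<Rightarrow> ennreal" where
  "M_moment nu chi = (SUP u\<in>{0<..}. (\<Sum>\<^sub>\<infinity>k::int. ennreal (\<bar>chi (exp (- real_of_int k) * u)\<bar>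
                         * abspow (real_of_int k - ln u) nu)))"

definition is_kernel :: "(real \<Rightarrow> real) \<Rightarrow> bool" where
  "is_kernel chi \<longleftrightarrow>
     (\<forall>u>0. ((\<lambda>k::int. chi (exp (- real_of_int k) * u)) has_sum 1) UNIV) \<and>
     M_moment 0 chi < \<infinity> \<and> (\<exists>nu>0. M_moment nu chi < \<infinity>)"

definition exp_sampling :: "(real \<Rightarrow> real) \<Rightarrow> real \<Rightarrow> (real \<Rightarrow> real) \<Rightarrow> real \<Rightarrow> real" where
  "exp_sampling chi w f t = (\<Sum>\<^sub>\<infinity>k::int. chi (exp (- real_of_int k) * t powr w) * f (exp (real_of_int k / w)))"

definition sup_norm :: "(real \<Rightarrow> real) \<Rightarrow> real" where
  "sup_norm f = Sup {\<bar>f x\<bar> | x. x > 0}"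

definition log_uc_space :: "(real \<Rightarrow> real) set" where
  "log_uc_space = {f. (\<exists>B. \<forall>x>0. \<bar>f x\<bar> \<le> B) \<and>
     (\<forall>\<epsilon>>0. \<exists>\<delta>>0. \<forall>p>0. \<forall>q>0. \<bar>ln p - ln q\<bar> < \<delta> \<longrightarrow> \<bar>f p - f q\<bar> < \<epsilon>)}"

definition log_modulus :: "(real \<Rightarrow> real) \<Rightarrow> real \<Rightarrow> real" where
  "log_modulus f \<delta> = Sup {\<bar>f p - f q\<bar> | p q. p > 0 \<and> q > 0 \<and> \<bar>ln p - ln q\<bar> \<le> \<delta>}"

end

theory Submission
  imports Defs
begin

lemma moment_real:
  fixes h :: "int \<Rightarrow> real" and M :: ennreal
  assumes nn: "\<And>k. h k \<ge> 0" and le: "(\<Sum>\<^sub>\<infinity>k. ennreal (h k)) \<le> M" and fin: "M < \<infinity>"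
  shows "h summable_on UNIV" "infsum h UNIV \<le> enn2real M"
proof -
  have fs: "sum h F \<le> enn2real M" if "finite F" for F
  proof -
    have "ennreal (sum h F) = sum (\<lambda>k. ennreal (h k)) F" using nn by (simp add: sum_ennreal)
    also have "\<dots> = infsum (\<lambda>k. ennreal (h k)) F" using that by simp
    also have "\<dots> \<le> infsum (\<lambda>k. ennreal (h k)) UNIV"
      by (rule infsum_mono_neutral) (simp_all add: nonneg_summable_on_complete)
    also have "\<dots> \<le> M" by (rule le)
    finally have "ennreal (sum h F) \<le> M" .
    then have "enn2real (ennreal (sum h F)) \<le> enn2real M" using fin by (intro enn2real_mono) auto
    then show ?thesis using nn by (simp add: sum_nonneg)
  qed
  show s: "h summable_on UNIV"
    by (rule nonneg_bdd_above_summable_on) (use nn fs in \<open>auto intro!: bdd_aboveI2\<close>)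
  show "infsum h UNIV \<le> enn2real M"
    by (rule infsum_le_finite_sums[OF s]) (use fs in auto)
qed

lemma chain:
  fixes f :: "real \<Rightarrow> real" and \<delta> \<omega> :: real
  assumes step: "\<And>x y. \<bar>x - y\<bar> \<le> \<delta> \<Longrightarrow> \<bar>f (exp x) - f (exp y)\<bar> \<le> \<omega>"
  shows "\<bar>x - y\<bar> \<le> real n * \<delta> \<Longrightarrow> \<bar>f (exp x) - f (exp y)\<bar> \<le> real n * \<omega>"
proof (induction n arbitrary: x y)
  case 0
  then show ?case by simp
next
  case (Suc n)
  define z where "z = x + (y - x) / (real n + 1)"
  have "\<bar>x - z\<bar> = \<bar>y - x\<bar> / (real n + 1)" unfolding z_def by (simp add: abs_divide)
  also have "\<dots> \<le> \<delta>" using Suc.prems by (simp add: divide_le_eq abs_minus_commute algebra_simps)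
  finally have 1: "\<bar>f (exp x) - f (exp z)\<bar> \<le> \<omega>" by (rule step)
  have "z - y = (x - y) * real n / (real n + 1)" unfolding z_def by (simp add: field_simps)
  then have "\<bar>z - y\<bar> = \<bar>x - y\<bar> * real n / (real n + 1)" by (simp add: abs_mult abs_divide)
  also have "\<dots> \<le> real n * \<delta>"
  proof -
    have "\<bar>x - y\<bar> * real n \<le> (real n + 1) * \<delta> * real n"
      using Suc.prems by (intro mult_right_mono) (auto simp: algebra_simps)
    then show ?thesis by (simp add: divide_le_eq algebra_simps)
  qed
  finally have 2: "\<bar>f (exp z) - f (exp y)\<bar> \<le> real n * \<omega>" by (rule Suc.IH)
  have "\<bar>f (exp x) - f (exp y)\<bar> \<le> \<bar>f (exp x) - f (exp z)\<bar> + \<bar>f (exp z) - f (exp y)\<bar>" by linarith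
  also have "\<dots> \<le> \<omega> + real n * \<omega>" using 1 2 by linarith
  finally show ?case by (simp add: algebra_simps)
qed

theorem theorem8:
  fixes chi f :: "real \<Rightarrow> real" and nu :: real
  assumes "0 < nu" "nu < 1"
    and "is_kernel chi"
    and "M_moment nu chi < \<infinity>"
    and "f \<in> log_uc_space"
  shows "\<forall>\<^sub>F w in at_top. \<forall>t>0.
     \<bar>exp_sampling chi w f t - f t\<bar>
       \<le> log_modulus f (w powr (- nu)) * (enn2real (M_moment nu chi) + 2 * enn2real (M_moment 0 chi))
         + 2 powr (nu + 1) * sup_norm f * enn2real (M_moment nu chi) * w powr (- nu)"
proof -
  from assms(5) obtain B where B: "\<And>x. x > 0 \<Longrightarrow> \<bar>f x\<bar> \<le> B" unfolding log_uc_space_def by auto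
  have B0: "B \<ge> 0" using B[of 1] by simp
  have bddn: "bdd_above {\<bar>f x\<bar> | x. x > 0}" using B by (auto intro!: bdd_aboveI[of _ B])
  have supn: "\<bar>f x\<bar> \<le> sup_norm f" if "x > 0" for x
    unfolding sup_norm_def by (rule cSup_upper) (use that bddn in auto)
  have supn0: "sup_norm f \<ge> 0" using supn[of 1] by simp
  have bddm: "bdd_above {\<bar>f p - f q\<bar> | p q. p > 0 \<and> q > 0 \<and> \<bar>ln p - ln q\<bar> \<le> \<delta>}" for \<delta>
  proof (rule bdd_aboveI[of _ "2 * B"], clarify)
    fix p q :: real assume "p > 0" "q > 0"
    then show "\<bar>f p - f q\<bar> \<le> 2 * B" using B[of p] B[of q] by linarith
  qed
  have modu: "\<bar>f p - f q\<bar> \<le> log_modulus f \<delta>" if "p > 0" "q > 0" "\<bar>ln p - ln q\<bar> \<le> \<delta>" for p q \<delta>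
    unfolding log_modulus_def by (rule cSup_upper) (use that bddm in auto)
  have modu0: "log_modulus f \<delta> \<ge> 0" if "\<delta> \<ge> 0" for \<delta>
    using modu[of 1 1 \<delta>] that by simp
  from assms(3) have ker: "\<And>u. u > 0 \<Longrightarrow> ((\<lambda>k::int. chi (exp (- real_of_int k) * u)) has_sum 1) UNIV"
    and M0fin: "M_moment 0 chi < \<infinity>" unfolding is_kernel_def by auto
  define M0 where "M0 = enn2real (M_moment 0 chi)"
  define M1 where "M1 = enn2real (M_moment nu chi)"
  have M00: "M0 \<ge> 0" "M1 \<ge> 0" unfolding M0_def M1_def by auto
  show ?thesis
  proof (rule eventually_mono[OF eventually_ge_at_top[of "1::real"]], intro allI impI)
    fix w t :: real assume w1: "1 \<le> w" and t0: "0 < t"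
    define \<delta> where "\<delta> = w powr (- nu)"
    have \<delta>0: "\<delta> > 0" unfolding \<delta>_def using w1 by simp
    define \<omega> where "\<omega> = log_modulus f \<delta>"
    have \<omega>0: "\<omega> \<ge> 0" unfolding \<omega>_def using \<delta>0 modu0 by simp
    define u where "u = t powr w"
    have u0: "u > 0" unfolding u_def using t0 by simp
    have lnu: "ln u = w * ln t" unfolding u_def using t0 by (simp add: ln_powr)
    define a where "a = (\<lambda>k::int. chi (exp (- real_of_int k) * u))"
    have asum: "(a has_sum 1) UNIV" unfolding a_def using ker u0 by simp
    define h0 where "h0 = (\<lambda>k. \<bar>a k\<bar>)"
    define h1 where "h1 = (\<lambda>k::int. \<bar>a k\<bar> * \<bar>real_of_int k - ln u\<bar> powr nu)"
    have le0: "(\<Sum>\<^sub>\<infinity>k. ennreal (h0 k)) \<le> M_moment 0 chi"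
    proof -
      have "(\<Sum>\<^sub>\<infinity>k. ennreal (h0 k)) = (\<Sum>\<^sub>\<infinity>k::int. ennreal (\<bar>chi (exp (- real_of_int k) * u)\<bar>
                         * abspow (real_of_int k - ln u) 0))"
        by (simp add: h0_def a_def abspow_def)
      also have "\<dots> \<le> M_moment 0 chi" unfolding M_moment_def by (rule SUP_upper) (use u0 in auto)
      finally show ?thesis .
    qed
    have le1: "(\<Sum>\<^sub>\<infinity>k. ennreal (h1 k)) \<le> M_moment nu chi"
    proof -
      have "(\<Sum>\<^sub>\<infinity>k. ennreal (h1 k)) = (\<Sum>\<^sub>\<infinity>k::int. ennreal (\<bar>chi (exp (- real_of_int k) * u)\<bar>
                         * abspow (real_of_int k - ln u) nu))"
        using assms(1) by (simp add: h1_def a_def abspow_def)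
      also have "\<dots> \<le> M_moment nu chi" unfolding M_moment_def by (rule SUP_upper) (use u0 in auto)
      finally show ?thesis .
    qed
    have s0: "h0 summable_on UNIV" and S0: "infsum h0 UNIV \<le> M0"
      using moment_real[OF _ le0 M0fin] unfolding M0_def h0_def by simp_all
    have s1: "h1 summable_on UNIV" and S1: "infsum h1 UNIV \<le> M1"
      using moment_real[OF _ le1 assms(4)] unfolding M1_def h1_def by simp_all
    define F where "F = (\<lambda>k::int. f (exp (real_of_int k / w)))"
    have sF: "(\<lambda>k. a k * F k) summable_on UNIV"
    proof -
      have "(\<lambda>k. B * h0 k) summable_on UNIV" using s0 by (rule summable_on_cmult_right)
      then have "(\<lambda>k. norm (B * h0 k)) summable_on UNIV"
        using summable_on_iff_abs_summable_on_real[of "\<lambda>k. B * h0 k" UNIV] by simp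
      then have "(\<lambda>k. norm (a k * F k)) summable_on UNIV"
        by (rule Infinite_Sum.abs_summable_on_comparison_test)
          (use B B0 in \<open>auto simp: h0_def F_def abs_mult mult.commute[of B] intro!: mult_left_mono order.trans[OF B]\<close>)
      then show ?thesis using summable_on_iff_abs_summable_on_real[of "\<lambda>k. a k * F k" UNIV] by simp
    qed
    have es: "exp_sampling chi w f t = infsum (\<lambda>k. a k * F k) UNIV"
      unfolding exp_sampling_def a_def F_def u_def by simp
    have gsum: "((\<lambda>k. a k * (F k - f t)) has_sum (exp_sampling chi w f t - f t)) UNIV"
    proof -
      have "((\<lambda>k. a k * F k + a k * (- f t)) has_sum (exp_sampling chi w f t + 1 * (- f t))) UNIV"
        unfolding es by (intro has_sum_add has_sum_infsum sF has_sum_cmult_left asum)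
      then show ?thesis by (simp add: algebra_simps)
    qed
    define c where "c = 2 * sup_norm f * w powr (- nu)"
    have c0: "c \<ge> 0" unfolding c_def using supn0 by simp
    have Gsum: "((\<lambda>k. \<omega> * (h0 k + h1 k) + c * h1 k) has_sum (\<omega> * (infsum h0 UNIV + infsum h1 UNIV) + c * infsum h1 UNIV)) UNIV"
      by (intro has_sum_add has_sum_cmult_right has_sum_infsum s0 s1)
    have pt: "\<bar>F k - f t\<bar> \<le> \<omega> * (1 + \<bar>real_of_int k - ln u\<bar> powr nu) + c * \<bar>real_of_int k - ln u\<bar> powr nu" for k
    proof -
      define D where "D = \<bar>real_of_int k - ln u\<bar>"
      have D0: "D \<ge> 0" unfolding D_def by simp
      have dD: "\<bar>real_of_int k / w - ln t\<bar> = D / w"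
      proof -
        have "real_of_int k / w - ln t = (real_of_int k - ln u) / w" using w1 lnu by (simp add: field_simps)
        then show ?thesis using w1 by (simp add: D_def abs_divide)
      qed
      have Ft: "F k - f t = f (exp (real_of_int k / w)) - f (exp (ln t))" using t0 by (simp add: F_def)
      have A: "D powr nu \<ge> 0" "\<omega> * D powr nu \<ge> 0" "c * D powr nu \<ge> 0" using \<omega>0 c0 by auto
      show ?thesis
      proof (cases "D \<le> w")
        case True
        have stp: "\<bar>f (exp x) - f (exp y)\<bar> \<le> \<omega>" if "\<bar>x - y\<bar> \<le> \<delta>" for x y
          unfolding \<omega>_def by (rule modu) (use that in auto)
        define n where "n = nat \<lceil>(D / w) / \<delta>\<rceil>"
        have n1: "real n \<ge> (D / w) / \<delta>" unfolding n_def by linarith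
        have n2: "real n \<le> (D / w) / \<delta> + 1" unfolding n_def using D0 w1 \<delta>0
          by (simp add: of_nat_nat)
        have "\<bar>real_of_int k / w - ln t\<bar> \<le> real n * \<delta>" using n1 \<delta>0 dD pos_divide_le_eq[OF \<delta>0, of "D / w" "real n"] by simp
        then have "\<bar>F k - f t\<bar> \<le> real n * \<omega>" unfolding Ft using stp by (intro chain[where f=f and \<delta>=\<delta> and \<omega>=\<omega>]) auto
        also have "\<dots> \<le> ((D / w) / \<delta> + 1) * \<omega>" using n2 \<omega>0 by (rule mult_right_mono)
        also have "(D / w) / \<delta> \<le> D powr nu"
        proof (cases "D = 0")
          case True then show ?thesis by simp
        next
          case False
          then have Dp: "D > 0" using D0 by simp
          have e1: "(D / w) / \<delta> = D * w powr (nu - 1)" unfolding \<delta>_def using w1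
            by (simp add: powr_minus_divide powr_diff field_simps)
          have e2: "D = D powr nu * D powr (1 - nu)" using Dp by (simp add: powr_add[symmetric])
          have e3: "D powr nu * D powr (1 - nu) * w powr (nu - 1) \<le> D powr nu * w powr (1 - nu) * w powr (nu - 1)"
            using Dp True assms(2) w1 by (intro mult_right_mono mult_left_mono powr_mono2) auto
          have e4: "D powr nu * w powr (1 - nu) * w powr (nu - 1) = D powr nu" using w1 by (simp add: mult.assoc powr_add[symmetric])
          have "(D / w) / \<delta> = D powr nu * D powr (1 - nu) * w powr (nu - 1)" using e1 e2 by metis
          then show ?thesis using e3 e4 by linarith
        qed
        then have "((D / w) / \<delta> + 1) * \<omega> \<le> (D powr nu + 1) * \<omega>" using \<omega>0
          by (intro mult_right_mono) auto
        also have "\<dots> = \<omega> * (1 + D powr nu)" by (simp add: algebra_simps)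
        finally show ?thesis using A unfolding D_def by linarith
      next
        case False
        have "\<bar>F k - f t\<bar> \<le> 2 * sup_norm f" using supn[of t] supn[of "exp (real_of_int k / w)"] t0
          unfolding F_def by auto
        also have "\<dots> \<le> 2 * sup_norm f * (D / w) powr nu"
        proof -
          have "(D / w) powr nu \<ge> 1" using False w1 assms(1) by (intro ge_one_powr_ge_zero) auto
          then show ?thesis using supn0 using mult_left_mono[of 1 "(D / w) powr nu" "2 * sup_norm f"] by simp
        qed
        also have "\<dots> = c * D powr nu" unfolding c_def using w1 D0
          by (simp add: powr_divide powr_minus_divide)
        finally show ?thesis using \<omega>0 A unfolding D_def
          by (smt (verit) mult_nonneg_nonneg powr_ge_zero)
      qed
    qed
    have "\<bar>exp_sampling chi w f t - f t\<bar> \<le> \<omega> * (infsum h0 UNIV + infsum h1 UNIV) + c * infsum h1 UNIV"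
    proof (rule norm_infsum_le[OF gsum Gsum, unfolded real_norm_def])
      fix k
      have "\<bar>a k * (F k - f t)\<bar> = \<bar>a k\<bar> * \<bar>F k - f t\<bar>" by (simp add: abs_mult)
      also have "\<dots> \<le> \<bar>a k\<bar> * (\<omega> * (1 + \<bar>real_of_int k - ln u\<bar> powr nu) + c * \<bar>real_of_int k - ln u\<bar> powr nu)"
        by (rule mult_left_mono[OF pt]) simp
      also have "\<dots> = \<omega> * (h0 k + h1 k) + c * h1 k" by (simp add: h0_def h1_def algebra_simps)
      finally show "\<bar>a k * (F k - f t)\<bar> \<le> \<omega> * (h0 k + h1 k) + c * h1 k" .
    qed
    also have "\<dots> \<le> \<omega> * (M0 + M1) + c * M1"
      using S0 S1 \<omega>0 c0 by (intro add_mono mult_left_mono) auto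
    also have "\<dots> \<le> \<omega> * (M1 + 2 * M0) + 2 powr (nu + 1) * sup_norm f * M1 * w powr (- nu)"
    proof -
      have "\<omega> * (M0 + M1) \<le> \<omega> * (M1 + 2 * M0)" using \<omega>0 M00 by (intro mult_left_mono) auto
      moreover have "c * M1 \<le> 2 powr (nu + 1) * sup_norm f * M1 * w powr (- nu)"
      proof -
        have "2 powr 1 \<le> 2 powr (nu + 1)" using assms(1) by (intro powr_mono) auto
        then have "2 \<le> 2 powr (nu + 1)" by simp
        then have "2 * (sup_norm f * M1 * w powr (- nu)) \<le> 2 powr (nu + 1) * (sup_norm f * M1 * w powr (- nu))"
          using supn0 M00 by (intro mult_right_mono) auto
        then show ?thesis unfolding c_def by (simp add: algebra_simps)
      qed
      ultimately show ?thesis by linarith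
    qed
    finally show "\<bar>exp_sampling chi w f t - f t\<bar>
       \<le> log_modulus f (w powr (- nu)) * (enn2real (M_moment nu chi) + 2 * enn2real (M_moment 0 chi))
         + 2 powr (nu + 1) * sup_norm f * enn2real (M_moment nu chi) * w powr (- nu)"
      unfolding \<omega>_def \<delta>_def M0_def M1_def .
  qed
qed

end
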